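(* Let $(X,d)$ be a complete metric space, $k\ge2$, $0<\rho<1$, $\mu:X^k\to X$ a nonexpansive, coordinatewise $\rho$-contractive $k$-mean, and $\le$ a closed partial order on $X$. Let $\mu_k=\mu$ and, for $n>k$, let $\mu_n$ be the iterated $\beta$-extensions. (1) If $\mu$ is monotone for $\le$, then $\mu_n$ is monotone for every $n\ge k$: $\mathbf{x}\le_n\mathbf{y}$ implies $\mu_n(\mathbf{x})\le\mu_n(\mathbf{y})$. (2) Let $\delta$ be another complete metric on $X$ and $\nu:X^k\to X$ a $k$-mean that is nonexpansive and coordinatewise $\rho$-contractive with respect to $\delta$, with iterated $\beta$-extensions $\nu_n$. Suppose $\le$ is closed in the product topology $(X,d)\times(X,\delta)$ and that $\mu$ or $\nu$ is monotone with respect to $\le$. If $\mu(\mathbf{x})\le\nu(\mathbf{x})$ for all $\mathbf{x}\in X^k$, then $\mu_n(\mathbf{x})\le\nu_n(\mathbf{x})$ for all $n\ge k$ and $\mathbf{x}\in X^n$.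
   Context: A $k$-mean is a map $\mu:X^k\to X$ with $\mu(x,\ldots,x)=x$. Nonexpansive: $d(\mu(\mathbf{x}),\mu(\mathbf{y}))\le\max_j d(x_j,y_j)$; coordinatewise $\rho$-contractive: $d(\mu(\mathbf{x}),\mu(\mathbf{y}))\le\rho\,d(x_j,y_j)$ when $\mathbf{x},\mathbf{y}$ differ only in coordinate $j$. $\le_n$ is the product order on $X^n$: $\mathbf{x}\le_n\mathbf{y}$ iff $x_i\le y_i$ for all $i$. A $k$-mean is monotone if $\mathbf{x}\le_k\mathbf{y}$ implies $\mu(\mathbf{x})\le\mu(\mathbf{y})$. A partial order is closed if its graph is closed in $X\times X$. Barycentric operator of a $k$-mean: $\beta(\mathbf{x})_j=\mu(x_1,\ldots,\widehat{x_j},\ldots,x_{k+1})$; $\mu_{n+1}$ is the unique continuous $(n+1)$-mean with $\beta_{\mu_n}^r(\mathbf{x})\to(\mu_{n+1}(\mathbf{x}),\ldots,\mu_{n+1}(\mathbf{x}))$ for all $\mathbf{x}$ (which exists under these hypotheses). *)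

theory Defs
  imports "HOL-Analysis.Analysis"
begin

text \<open>Tuples in X^n are lists of length n. A metric on X is a function
  d :: 'a => 'a => real with Metric_space UNIV d.\<close>

definition is_mean :: "nat \<Rightarrow> ('a list \<Rightarrow> 'a) \<Rightarrow> bool" where
  "is_mean k mu \<longleftrightarrow> (\<forall>x. mu (replicate k x) = x)"

definition nonexpansive_mean :: "('a \<Rightarrow> 'a \<Rightarrow> real) \<Rightarrow> nat \<Rightarrow> ('a list \<Rightarrow> 'a) \<Rightarrow> bool" where
  "nonexpansive_mean d k mu \<longleftrightarrow>
     (\<forall>x y. length x = k \<longrightarrow> length y = k \<longrightarrow>
        d (mu x) (mu y) \<le> Max ((\<lambda>j. d (x ! j) (y ! j)) ` {..<k}))"

definition coord_contractive :: "('a \<Rightarrow> 'a \<Rightarrow> real) \<Rightarrow> real \<Rightarrow> nat \<Rightarrow> ('a list \<Rightarrow> 'a) \<Rightarrow> bool" where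
  "coord_contractive d \<rho> k mu \<longleftrightarrow>
     (\<forall>x y j. length x = k \<longrightarrow> length y = k \<longrightarrow> j < k \<longrightarrow>
        (\<forall>i<k. i \<noteq> j \<longrightarrow> x ! i = y ! i) \<longrightarrow>
        d (mu x) (mu y) \<le> \<rho> * d (x ! j) (y ! j))"

definition monotone_mean :: "('a \<Rightarrow> 'a \<Rightarrow> bool) \<Rightarrow> nat \<Rightarrow> ('a list \<Rightarrow> 'a) \<Rightarrow> bool" where
  "monotone_mean le n mu \<longleftrightarrow>
     (\<forall>x y. length x = n \<longrightarrow> length y = n \<longrightarrow> list_all2 le x y \<longrightarrow> le (mu x) (mu y))"

definition del_nth :: "nat \<Rightarrow> 'a list \<Rightarrow> 'a list" where
  "del_nth j xs = take j xs @ drop (Suc j) xs"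

definition beta_op :: "('a list \<Rightarrow> 'a) \<Rightarrow> 'a list \<Rightarrow> 'a list" where
  "beta_op mu xs = map (\<lambda>j. mu (del_nth j xs)) [0..<length xs]"

definition beta_ext :: "('a \<Rightarrow> 'a \<Rightarrow> real) \<Rightarrow> ('a list \<Rightarrow> 'a) \<Rightarrow> 'a list \<Rightarrow> 'a" where
  "beta_ext d mu xs = (THE z. \<forall>j < length xs.
       limitin (Metric_space.mtopology UNIV d) (\<lambda>r. ((beta_op mu ^^ r) xs) ! j) z sequentially)"

text \<open>iter_ext d mu m is mu_{k+m}, where mu = mu_k.\<close>
primrec iter_ext :: "('a \<Rightarrow> 'a \<Rightarrow> real) \<Rightarrow> ('a list \<Rightarrow> 'a) \<Rightarrow> nat \<Rightarrow> 'a list \<Rightarrow> 'a" where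
  "iter_ext d mu 0 = mu"
| "iter_ext d mu (Suc m) = beta_ext d (iter_ext d mu m)"

definition closed_partial_order :: "'a topology \<Rightarrow> 'a topology \<Rightarrow> ('a \<Rightarrow> 'a \<Rightarrow> bool) \<Rightarrow> bool" where
  "closed_partial_order T1 T2 le \<longleftrightarrow>
     (\<forall>x. le x x) \<and> (\<forall>x y. le x y \<longrightarrow> le y x \<longrightarrow> x = y) \<and>
     (\<forall>x y z. le x y \<longrightarrow> le y z \<longrightarrow> le x z) \<and>
     closedin (prod_topology T1 T2) {(x, y). le x y}"

end

theory Submission
  imports Defs
begin

lemma length_del_nth: "j < length xs \<Longrightarrow> length (del_nth j xs) = length xs - 1"
  by (simp add: del_nth_def)

lemma nth_del_nth: "j < length xs \<Longrightarrow> i < length xs - 1 \<Longrightarrow>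
   del_nth j xs ! i = (if i < j then xs ! i else xs ! Suc i)"
  by (auto simp: del_nth_def nth_append min_def)

lemma del_nth_replicate: "j < m \<Longrightarrow> del_nth j (replicate m a) = replicate (m - 1) a"
  by (simp add: del_nth_def replicate_add[symmetric])

lemma del_nth_rel: "list_all2 P xs ys \<Longrightarrow> list_all2 P (del_nth j xs) (del_nth j ys)"
  unfolding del_nth_def by (intro list_all2_appendI list_all2_takeI list_all2_dropI)

lemma length_beta_op[simp]: "length (beta_op mu xs) = length xs"
  by (simp add: beta_op_def)

lemma nth_beta_op: "j < length xs \<Longrightarrow> beta_op mu xs ! j = mu (del_nth j xs)"
  by (simp add: beta_op_def)

lemma length_beta_pow[simp]: "length ((beta_op mu ^^ r) xs) = length xs"
  by (induction r) auto

lemma beta_replicate: "is_mean (m - 1) mu \<Longrightarrow> beta_op mu (replicate m a) = replicate m a"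
  by (intro nth_equalityI) (auto simp: nth_beta_op is_mean_def del_nth_replicate simp del: replicate.simps)

lemma beta_pow_replicate: "is_mean (m - 1) mu \<Longrightarrow> (beta_op mu ^^ r) (replicate m a) = replicate m a"
  by (induction r) (auto simp: beta_replicate simp del: replicate.simps)

locale umet = Metric_space "UNIV :: 'a set" d for d :: "'a \<Rightarrow> 'a \<Rightarrow> real"
begin

lemma tri: "d x z \<le> d x y + d y z"
  using triangle by auto

lemma nonexp_bound:
  assumes "nonexpansive_mean d n mu" "n \<ge> 1" "length x = n" "length y = n"
    "\<forall>p<n. d (x!p) (y!p) \<le> M"
  shows "d (mu x) (mu y) \<le> M"
proof -
  have "d (mu x) (mu y) \<le> Max ((\<lambda>j. d (x ! j) (y ! j)) ` {..<n})"
    using assms unfolding nonexpansive_mean_def by blast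
  also have "\<dots> \<le> M" using assms by (subst Max_le_iff) (auto simp: lessThan_empty_iff)
  finally show ?thesis .
qed

lemma L_cons:
  assumes ne: "coord_contractive d \<rho> n mu" and rho: "0 \<le> \<rho>"
    and len: "length ys = Suc n"
    and C: "\<forall>p. Suc p < Suc n \<longrightarrow> d (ys!p) (ys!Suc p) \<le> C"
  shows "\<forall>p. Suc p < Suc n \<longrightarrow> d (beta_op mu ys!p) (beta_op mu ys!Suc p) \<le> \<rho> * C"
proof (intro allI impI)
  fix p assume p: "Suc p < Suc n"
  have l1: "length (del_nth p ys) = n" "length (del_nth (Suc p) ys) = n"
    using p len by (auto simp: length_del_nth)
  have eq: "\<forall>i<n. i \<noteq> p \<longrightarrow> del_nth p ys ! i = del_nth (Suc p) ys ! i"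
    using p len by (auto simp: nth_del_nth)
  have "d (mu (del_nth p ys)) (mu (del_nth (Suc p) ys)) \<le> \<rho> * d (del_nth p ys ! p) (del_nth (Suc p) ys ! p)"
    using ne l1 eq p unfolding coord_contractive_def by auto
  also have "del_nth p ys ! p = ys ! Suc p \<and> del_nth (Suc p) ys ! p = ys ! p"
    using p len by (auto simp: nth_del_nth)
  then have "\<rho> * d (del_nth p ys ! p) (del_nth (Suc p) ys ! p) = \<rho> * d (ys ! Suc p) (ys ! p)" by simp
  also have "\<rho> * d (ys ! Suc p) (ys ! p) \<le> \<rho> * C"
    using C p rho by (simp add: commute mult_left_mono)
  finally show "d (beta_op mu ys!p) (beta_op mu ys!Suc p) \<le> \<rho> * C"
    using p len by (simp add: nth_beta_op)
qed

lemma del_nth_cases: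
  assumes "j < length xs" "p < length xs - 1"
  shows "del_nth j xs ! p = xs ! p \<or> del_nth j xs ! p = xs ! Suc p"
  using assms by (auto simp: nth_del_nth)

lemma L_pairs:
  assumes ne: "nonexpansive_mean d n mu" and n: "n \<ge> 1"
    and len: "length ys = Suc n"
    and C: "\<forall>p. Suc p < Suc n \<longrightarrow> d (ys!p) (ys!Suc p) \<le> C"
  shows "\<forall>i j. i < Suc n \<longrightarrow> j < Suc n \<longrightarrow> d (beta_op mu ys!i) (beta_op mu ys!j) \<le> C"
proof (intro allI impI)
  fix i j assume i: "i < Suc n" and j: "j < Suc n"
  have "Suc 0 < Suc n" using n by simp
  then have "d (ys!0) (ys!Suc 0) \<le> C" using C by blast
  then have C0: "0 \<le> C" using nonneg[of "ys!0" "ys!Suc 0"] by linarith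
  have "\<forall>p<n. d (del_nth i ys ! p) (del_nth j ys ! p) \<le> C"
  proof (intro allI impI)
    fix p assume p: "p < n"
    have "Suc p < Suc n" using p by simp
    then have c1: "d (ys!p) (ys!Suc p) \<le> C" "d (ys!Suc p) (ys!p) \<le> C" using C by (auto simp: commute)
    show "d (del_nth i ys ! p) (del_nth j ys ! p) \<le> C"
      using del_nth_cases[of i ys p] del_nth_cases[of j ys p] i j p len c1 C0 by auto
  qed
  then show "d (beta_op mu ys!i) (beta_op mu ys!j) \<le> C"
    using nonexp_bound[OF ne n] i j len by (simp add: nth_beta_op length_del_nth)
qed

lemma L_ball:
  assumes ne: "nonexpansive_mean d n mu" and mean: "is_mean n mu" and n: "n \<ge> 1"
    and len: "length ys = Suc n"
    and D: "\<forall>i<Suc n. d (ys!i) a \<le> D"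
  shows "\<forall>j<Suc n. d (beta_op mu ys!j) a \<le> D"
proof (intro allI impI)
  fix j assume j: "j < Suc n"
  have "\<forall>p<n. d (del_nth j ys ! p) (replicate n a ! p) \<le> D"
  proof (intro allI impI)
    fix p assume p: "p < n"
    show "d (del_nth j ys ! p) (replicate n a ! p) \<le> D"
      using del_nth_cases[of j ys p] j p len D by auto
  qed
  then have "d (mu (del_nth j ys)) (mu (replicate n a)) \<le> D"
    using nonexp_bound[OF ne n] j len by (simp add: length_del_nth)
  then show "d (beta_op mu ys!j) a \<le> D"
    using mean j len by (simp add: nth_beta_op is_mean_def)
qed

lemma L_pointwise:
  assumes ne: "nonexpansive_mean d n mu" and n: "n \<ge> 1"
    and len: "length xs = Suc n" "length ys = Suc n"
    and D: "\<forall>i<Suc n. d (xs!i) (ys!i) \<le> D"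
  shows "\<forall>j<Suc n. d (beta_op mu xs!j) (beta_op mu ys!j) \<le> D"
proof (intro allI impI)
  fix j assume j: "j < Suc n"
  have "\<forall>p<n. d (del_nth j xs ! p) (del_nth j ys ! p) \<le> D"
    using j len D by (auto simp: nth_del_nth)
  then show "d (beta_op mu xs!j) (beta_op mu ys!j) \<le> D"
    using nonexp_bound[OF ne n] j len by (simp add: nth_beta_op length_del_nth)
qed

lemma lim_le:
  assumes f: "limitin mtopology f a sequentially" and g: "limitin mtopology g b sequentially"
    and ev: "eventually (\<lambda>s. d (f s) (g s) \<le> M) sequentially"
  shows "d a b \<le> M"
proof (rule field_le_epsilon)
  fix e :: real assume e: "0 < e"
  have h1: "\<forall>\<epsilon>>0. eventually (\<lambda>s. d (f s) a < \<epsilon>) sequentially"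
    using f unfolding limitin_metric by auto
  have h2: "\<forall>\<epsilon>>0. eventually (\<lambda>s. d (g s) b < \<epsilon>) sequentially"
    using g unfolding limitin_metric by auto
  have e2: "e/2 > 0" using e by simp
  have "eventually (\<lambda>s. d (f s) a < e/2) sequentially" "eventually (\<lambda>s. d (g s) b < e/2) sequentially"
    using h1 h2 e2 by blast+
  with ev have "eventually (\<lambda>s. d (f s) a < e/2 \<and> d (g s) b < e/2 \<and> d (f s) (g s) \<le> M) sequentially"
    by (simp add: eventually_conj_iff)
  then obtain s where s: "d (f s) a < e/2" "d (g s) b < e/2" "d (f s) (g s) \<le> M"
    using eventually_happens trivial_limit_sequentially by blast
  have "d a b \<le> d a (f s) + d (f s) b" by (rule tri)
  also have "d (f s) b \<le> d (f s) (g s) + d (g s) b" by (rule tri)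
  finally show "d a b \<le> M + e" using s by (simp add: commute)
qed

end

lemma small_pow:
  fixes \<rho> E \<epsilon> :: real
  assumes "0 \<le> \<rho>" "\<rho> < 1" "0 \<le> E" "0 < \<epsilon>"
  shows "\<exists>r. 2 * \<rho>^r * E < \<epsilon>"
proof -
  have "\<epsilon> / (2 * (E + 1)) > 0" using assms by simp
  then obtain r where r: "\<rho>^r < \<epsilon> / (2 * (E + 1))" using real_arch_pow_inv assms by blast
  have "2 * \<rho>^r * E \<le> 2 * \<rho>^r * (E + 1)" using assms by (intro mult_left_mono) auto
  also have "\<dots> < \<epsilon>" using r assms by (simp add: field_simps)
  finally show ?thesis by blast
qed

context umet
begin

lemma beta_conv:
  assumes comp: "mcomplete" and ne: "nonexpansive_mean d n mu"
    and cc: "coord_contractive d \<rho> n mu" and mean: "is_mean n mu" and n: "n \<ge> 1"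
    and rho: "0 \<le> \<rho>" "\<rho> < 1" and len: "length xs = Suc n"
  shows "\<exists>z. \<forall>j<Suc n. limitin mtopology (\<lambda>r. (beta_op mu ^^ r) xs ! j) z sequentially"
proof -
  define y where "y r = (beta_op mu ^^ r) xs" for r
  have leny: "length (y r) = Suc n" for r using len by (simp add: y_def)
  have ystep: "y (Suc r) = beta_op mu (y r)" for r by (simp add: y_def)
  define E where "E = (\<Sum>p<n. d (xs!p) (xs!Suc p))"
  have E0: "0 \<le> E" by (simp add: E_def sum_nonneg)
  have "d (xs!p) (xs!Suc p) \<le> E" if "p<n" for p
    unfolding E_def by (rule member_le_sum) (use that in auto)
  then have cons0: "\<forall>p. Suc p < Suc n \<longrightarrow> d (y 0!p) (y 0!Suc p) \<le> E"
    by (simp add: y_def)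
  have cons: "\<forall>p. Suc p < Suc n \<longrightarrow> d (y r!p) (y r!Suc p) \<le> \<rho>^r * E" for r
  proof (induction r)
    case 0 then show ?case using cons0 by simp
  next
    case (Suc r)
    show ?case using L_cons[OF cc rho(1) leny Suc] by (simp add: ystep mult.assoc)
  qed
  have pairs: "\<forall>i j. i<Suc n \<longrightarrow> j<Suc n \<longrightarrow> d (y (Suc r)!i) (y (Suc r)!j) \<le> \<rho>^r*E" for r
    using L_pairs[OF ne n leny cons] ystep by simp
  have ball: "\<forall>i<Suc n. \<forall>j<Suc n. d (y (Suc r + s)!j) (y (Suc r)!i) \<le> \<rho>^r*E" for r s
  proof (induction s)
    case 0 then show ?case using pairs[of r] by (metis add_0_right commute)
  next
    case (Suc s)
    show ?case
    proof (intro allI impI)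
      fix i j assume i: "i < Suc n" and j: "j < Suc n"
      have "\<forall>j<Suc n. d (beta_op mu (y (Suc r + s))!j) (y (Suc r)!i) \<le> \<rho>^r*E"
        using L_ball[OF ne mean n leny] Suc i by blast
      then show "d (y (Suc r + Suc s)!j) (y (Suc r)!i) \<le> \<rho>^r*E"
        using j by (simp add: ystep[symmetric])
    qed
  qed
  have close: "d (y s!j) (y t!j') \<le> 2*\<rho>^r*E"
    if hs: "s \<ge> Suc r" and ht: "t \<ge> Suc r" and hj: "j<Suc n" "j' < Suc n" for s t j j' r
  proof -
    obtain s' where st1: "s = Suc r + s'" using le_Suc_ex[OF hs] by blast
    obtain t' where st2: "t = Suc r + t'" using le_Suc_ex[OF ht] by blast
    note st = st1 st2
    have b1: "d (y s!j) (y (Suc r)!0) \<le> \<rho>^r*E" using ball[of r s'] st hj by simp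
    have b2: "d (y t!j') (y (Suc r)!0) \<le> \<rho>^r*E" using ball[of r t'] st hj by simp
    have "d (y s!j) (y t!j') \<le> d (y s!j) (y (Suc r)!0) + d (y (Suc r)!0) (y t!j')" by (rule tri)
    also have "\<dots> \<le> \<rho>^r*E + \<rho>^r*E"
      using b1 b2 commute[of "y (Suc r)!0" "y t!j'"] by linarith
    finally show ?thesis by (simp add: mult_ac)
  qed
  have "MCauchy (\<lambda>s. y s!0)"
    unfolding MCauchy_def
  proof (intro conjI allI impI)
    fix \<epsilon> :: real assume e: "\<epsilon> > 0"
    obtain r where r: "2*\<rho>^r*E < \<epsilon>" using small_pow[OF rho E0 e] by blast
    show "\<exists>N. \<forall>s t. N \<le> s \<longrightarrow> N \<le> t \<longrightarrow> d (y s!0) (y t!0) < \<epsilon>"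
    proof (intro exI[of _ "Suc r"] allI impI)
      fix s t assume "Suc r \<le> s" "Suc r \<le> t"
      then have "d (y s!0) (y t!0) \<le> 2*\<rho>^r*E" using close by blast
      then show "d (y s!0) (y t!0) < \<epsilon>" using r by linarith
    qed
  qed auto
  then obtain z where z: "limitin mtopology (\<lambda>s. y s!0) z sequentially"
    using comp unfolding mcomplete_def by blast
  have "limitin mtopology (\<lambda>s. y s!j) z sequentially" if j: "j < Suc n" for j
    unfolding limitin_metric
  proof (intro conjI allI impI)
    fix \<epsilon> :: real assume e: "\<epsilon> > 0"
    then have e2: "\<epsilon>/2 > 0" by simp
    have h0: "\<forall>\<epsilon>>0. eventually (\<lambda>s. d (y s!0) z < \<epsilon>) sequentially"
      using z unfolding limitin_metric by auto
    have h1: "eventually (\<lambda>s. d (y s!0) z < \<epsilon>/2) sequentially"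
      using h0 e2 by blast
    obtain r where r: "2*\<rho>^r*E < \<epsilon>/2" using small_pow[OF rho E0 e2] by blast
    have h2: "eventually (\<lambda>s. s \<ge> Suc r) sequentially" by (rule eventually_ge_at_top)
    show "eventually (\<lambda>s. y s!j \<in> UNIV \<and> d (y s!j) z < \<epsilon>) sequentially"
      using h1 h2
    proof (rule eventually_elim2)
      fix s assume a: "d (y s!0) z < \<epsilon>/2" "s \<ge> Suc r"
      have "d (y s!j) z \<le> d (y s!j) (y s!0) + d (y s!0) z" by (rule tri)
      also have "d (y s!j) (y s!0) \<le> 2*\<rho>^r*E" using close[of r s s j 0] a j by simp
      finally show "y s!j \<in> UNIV \<and> d (y s!j) z < \<epsilon>" using a r by simp
    qed
  qed simp
  then show ?thesis unfolding y_def by blast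
qed

lemma beta_ext_lim:
  assumes comp: "mcomplete" and ne: "nonexpansive_mean d n mu"
    and cc: "coord_contractive d \<rho> n mu" and mean: "is_mean n mu" and n: "n \<ge> 1"
    and rho: "0 \<le> \<rho>" "\<rho> < 1" and len: "length xs = Suc n"
  shows "\<forall>j<Suc n. limitin mtopology (\<lambda>r. (beta_op mu ^^ r) xs ! j) (beta_ext d mu xs) sequentially"
proof -
  obtain z where z: "\<forall>j<Suc n. limitin mtopology (\<lambda>r. (beta_op mu ^^ r) xs ! j) z sequentially"
    using beta_conv[OF assms] by blast
  have "beta_ext d mu xs = z"
    unfolding beta_ext_def
  proof (rule the_equality)
    show "\<forall>j<length xs. limitin mtopology (\<lambda>r. (beta_op mu ^^ r) xs ! j) z sequentially"
      using z len by simp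
  next
    fix z' assume "\<forall>j<length xs. limitin mtopology (\<lambda>r. (beta_op mu ^^ r) xs ! j) z' sequentially"
    then have "limitin mtopology (\<lambda>r. (beta_op mu ^^ r) xs ! 0) z' sequentially" using len by simp
    moreover have "limitin mtopology (\<lambda>r. (beta_op mu ^^ r) xs ! 0) z sequentially" using z by simp
    ultimately show "z' = z" using limitin_metric_unique trivial_limit_sequentially by blast
  qed
  then show ?thesis using z by simp
qed

end

context umet
begin

lemma beta_ext_good:
  assumes comp: "mcomplete" and ne: "nonexpansive_mean d n mu"
    and cc: "coord_contractive d \<rho> n mu" and mean: "is_mean n mu" and n: "n \<ge> 1"
    and rho: "0 \<le> \<rho>" "\<rho> < 1"
  shows "is_mean (Suc n) (beta_ext d mu)" "nonexpansive_mean d (Suc n) (beta_ext d mu)"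
    "coord_contractive d \<rho> (Suc n) (beta_ext d mu)"
proof -
  note lim = beta_ext_lim[OF comp ne cc mean n rho]
  show "is_mean (Suc n) (beta_ext d mu)"
    unfolding is_mean_def
  proof
    fix a
    have "limitin mtopology (\<lambda>r. (beta_op mu ^^ r) (replicate (Suc n) a) ! 0) (beta_ext d mu (replicate (Suc n) a)) sequentially"
      using lim[of "replicate (Suc n) a"] by simp
    moreover have "(\<lambda>r. (beta_op mu ^^ r) (replicate (Suc n) a) ! 0) = (\<lambda>r. a)"
      using beta_pow_replicate[of "Suc n" mu] mean by (simp del: replicate.simps)
    moreover have "limitin mtopology (\<lambda>r. a) a sequentially" by simp
    ultimately show "beta_ext d mu (replicate (Suc n) a) = a"
      using limitin_metric_unique trivial_limit_sequentially by metis
  qed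
  show "nonexpansive_mean d (Suc n) (beta_ext d mu)"
    unfolding nonexpansive_mean_def
  proof (intro allI impI)
    fix x y :: "'a list" assume lx: "length x = Suc n" and ly: "length y = Suc n"
    define M where "M = Max ((\<lambda>j. d (x ! j) (y ! j)) ` {..<Suc n})"
    have hM: "\<forall>i<Suc n. d (x!i) (y!i) \<le> M" unfolding M_def by (auto intro!: Max_ge)
    have it: "\<forall>j<Suc n. d ((beta_op mu ^^ r) x!j) ((beta_op mu ^^ r) y!j) \<le> M" for r
    proof (induction r)
      case 0 then show ?case using hM by simp
    next
      case (Suc r)
      show ?case using L_pointwise[OF ne n _ _ Suc] lx ly by simp
    qed
    have "d (beta_ext d mu x) (beta_ext d mu y) \<le> M"
      by (rule lim_le[OF lim[rule_format, OF lx, of 0] lim[rule_format, OF ly, of 0]]) (use it in auto)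
    then show "d (beta_ext d mu x) (beta_ext d mu y) \<le> Max ((\<lambda>j. d (x ! j) (y ! j)) ` {..<Suc n})"
      by (simp add: M_def)
  qed
  show "coord_contractive d \<rho> (Suc n) (beta_ext d mu)"
    unfolding coord_contractive_def
  proof (intro allI impI)
    fix x y :: "'a list" and j
    assume lx: "length x = Suc n" and ly: "length y = Suc n" and j: "j < Suc n"
      and eq: "\<forall>i<Suc n. i \<noteq> j \<longrightarrow> x ! i = y ! i"
    define c where "c = \<rho> * d (x!j) (y!j)"
    have c0: "0 \<le> c" unfolding c_def using rho by simp
    have step1: "\<forall>i<Suc n. d (beta_op mu x!i) (beta_op mu y!i) \<le> c"
    proof (intro allI impI)
      fix i assume i: "i < Suc n"
      show "d (beta_op mu x!i) (beta_op mu y!i) \<le> c"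
      proof (cases "i = j")
        case True
        have "del_nth j x = del_nth j y"
          using lx ly j eq by (intro nth_equalityI) (auto simp: length_del_nth nth_del_nth)
        then show ?thesis using True i lx ly c0 by (simp add: nth_beta_op)
      next
        case False
        define q where "q = (if j < i then j else j - 1)"
        have q: "q < n" using False i j unfolding q_def by auto
        have l1: "length (del_nth i x) = n" "length (del_nth i y) = n"
          using i lx ly by (auto simp: length_del_nth)
        have qx: "del_nth i x ! q = x ! j" "del_nth i y ! q = y ! j"
          using q i lx ly False unfolding q_def by (auto simp: nth_del_nth)
        have oth: "\<forall>p<n. p \<noteq> q \<longrightarrow> del_nth i x ! p = del_nth i y ! p"
          using i lx ly False eq unfolding q_def by (auto simp: nth_del_nth)
        have "d (mu (del_nth i x)) (mu (del_nth i y)) \<le> \<rho> * d (del_nth i x ! q) (del_nth i y ! q)"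
          using cc l1 q oth unfolding coord_contractive_def by blast
        then show ?thesis using qx i lx ly by (simp add: nth_beta_op c_def)
      qed
    qed
    have it: "\<forall>i<Suc n. d ((beta_op mu ^^ Suc r) x!i) ((beta_op mu ^^ Suc r) y!i) \<le> c" for r
    proof (induction r)
      case 0 then show ?case using step1 by simp
    next
      case (Suc r)
      show ?case using L_pointwise[OF ne n _ _ Suc] lx ly by simp
    qed
    have "d (beta_ext d mu x) (beta_ext d mu y) \<le> c"
    proof (rule lim_le[OF lim[rule_format, OF lx, of 0] lim[rule_format, OF ly, of 0]])
      show "\<forall>\<^sub>F s in sequentially. d ((beta_op mu ^^ s) x ! 0) ((beta_op mu ^^ s) y ! 0) \<le> c"
        unfolding eventually_sequentially
      proof (intro exI[of _ 1] allI impI)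
        fix s :: nat assume "1 \<le> s"
        then obtain r where "s = Suc r" by (cases s) auto
        then show "d ((beta_op mu ^^ s) x ! 0) ((beta_op mu ^^ s) y ! 0) \<le> c" using it[of r] by simp
      qed
    qed auto
    then show "d (beta_ext d mu x) (beta_ext d mu y) \<le> \<rho> * d (x ! j) (y ! j)" by (simp add: c_def)
  qed
qed

end

lemma (in umet) iter_good:
  assumes comp: "mcomplete" and ne: "nonexpansive_mean d k mu"
    and cc: "coord_contractive d \<rho> k mu" and mean: "is_mean k mu" and k: "k \<ge> 1"
    and rho: "0 \<le> \<rho>" "\<rho> < 1"
  shows "is_mean (k+m) (iter_ext d mu m) \<and> nonexpansive_mean d (k+m) (iter_ext d mu m)
    \<and> coord_contractive d \<rho> (k+m) (iter_ext d mu m)"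
proof (induction m)
  case 0 then show ?case using assms by simp
next
  case (Suc m)
  have "k + m \<ge> 1" using k by simp
  then show ?case using beta_ext_good[OF comp _ _ _ _ rho, of "k+m" "iter_ext d mu m"] Suc by simp
qed

lemma compare_step:
  assumes ud: "umet d" and ue: "umet e"
    and cd: "Metric_space.mcomplete UNIV d" and ce: "Metric_space.mcomplete UNIV e"
    and ne1: "nonexpansive_mean d n mu" and cc1: "coord_contractive d \<rho> n mu" and m1: "is_mean n mu"
    and ne2: "nonexpansive_mean e n nu" and cc2: "coord_contractive e \<rho> n nu" and m2: "is_mean n nu"
    and n: "n \<ge> 1" and rho: "0 \<le> \<rho>" "\<rho> < 1"
    and cl: "closedin (prod_topology (Metric_space.mtopology UNIV d) (Metric_space.mtopology UNIV e)) {(x,y). le x y}"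
    and P: "\<forall>x y. length x = n \<longrightarrow> length y = n \<longrightarrow> list_all2 le x y \<longrightarrow> le (mu x) (nu y)"
  shows "\<forall>x y. length x = Suc n \<longrightarrow> length y = Suc n \<longrightarrow> list_all2 le x y \<longrightarrow>
     le (beta_ext d mu x) (beta_ext e nu y)"
proof (intro allI impI)
  fix x y assume lx: "length x = Suc n" and ly: "length y = Suc n" and xy: "list_all2 le x y"
  have rel: "list_all2 le ((beta_op mu ^^ r) x) ((beta_op nu ^^ r) y)" for r
  proof (induction r)
    case 0 then show ?case using xy by simp
  next
    case (Suc r)
    let ?a = "(beta_op mu ^^ r) x" and ?b = "(beta_op nu ^^ r) y"
    have la: "length ?a = Suc n" "length ?b = Suc n" using lx ly by auto
    have "le (mu (del_nth j ?a)) (nu (del_nth j ?b))" if j: "j < Suc n" for j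
      using P del_nth_rel[OF Suc, of j] la j by (simp add: length_del_nth)
    then show ?case using la by (simp add: list_all2_conv_all_nth nth_beta_op)
  qed
  have l1: "limitin (Metric_space.mtopology UNIV d) (\<lambda>r. (beta_op mu ^^ r) x ! 0) (beta_ext d mu x) sequentially"
    using umet.beta_ext_lim[OF ud cd ne1 cc1 m1 n rho lx] by simp
  have l2: "limitin (Metric_space.mtopology UNIV e) (\<lambda>r. (beta_op nu ^^ r) y ! 0) (beta_ext e nu y) sequentially"
    using umet.beta_ext_lim[OF ue ce ne2 cc2 m2 n rho ly] by simp
  have "limitin (prod_topology (Metric_space.mtopology UNIV d) (Metric_space.mtopology UNIV e))
     (\<lambda>r. ((beta_op mu ^^ r) x ! 0, (beta_op nu ^^ r) y ! 0)) (beta_ext d mu x, beta_ext e nu y) sequentially"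
    using l1 l2 by (simp add: limitin_pairwise o_def)
  note L = this
  have E: "eventually (\<lambda>r. ((beta_op mu ^^ r) x ! 0, (beta_op nu ^^ r) y ! 0) \<in> {(x,y). le x y}) sequentially"
  proof (intro always_eventually allI)
    fix r
    have "le ((beta_op mu ^^ r) x ! 0) ((beta_op nu ^^ r) y ! 0)"
      using list_all2_nthD[OF rel[of r], of 0] lx by simp
    then show "((beta_op mu ^^ r) x ! 0, (beta_op nu ^^ r) y ! 0) \<in> {(x,y). le x y}" by simp
  qed
  have "(beta_ext d mu x, beta_ext e nu y) \<in> {(x,y). le x y}"
    using limitin_closedin[OF L cl E] by simp
  then show "le (beta_ext d mu x) (beta_ext e nu y)" by simp
qed

lemma main_compare:
  assumes ud: "umet d" and ue: "umet e"
    and cd: "Metric_space.mcomplete UNIV d" and ce: "Metric_space.mcomplete UNIV e"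
    and ne1: "nonexpansive_mean d k mu" and cc1: "coord_contractive d \<rho> k mu" and m1: "is_mean k mu"
    and ne2: "nonexpansive_mean e k nu" and cc2: "coord_contractive e \<rho> k nu" and m2: "is_mean k nu"
    and k: "k \<ge> 1" and rho: "0 \<le> \<rho>" "\<rho> < 1"
    and cl: "closedin (prod_topology (Metric_space.mtopology UNIV d) (Metric_space.mtopology UNIV e)) {(x,y). le x y}"
    and P: "\<forall>x y. length x = k \<longrightarrow> length y = k \<longrightarrow> list_all2 le x y \<longrightarrow> le (mu x) (nu y)"
  shows "\<forall>x y. length x = k + m \<longrightarrow> length y = k + m \<longrightarrow> list_all2 le x y \<longrightarrow>
     le (iter_ext d mu m x) (iter_ext e nu m y)"
proof (induction m)
  case 0 then show ?case using P by simp
next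
  case (Suc m)
  note g1 = umet.iter_good[OF ud cd ne1 cc1 m1 k rho, of m]
  note g2 = umet.iter_good[OF ue ce ne2 cc2 m2 k rho, of m]
  have km: "k + m \<ge> 1" using k by simp
  have "\<forall>x y. length x = Suc (k+m) \<longrightarrow> length y = Suc (k+m) \<longrightarrow> list_all2 le x y \<longrightarrow>
     le (beta_ext d (iter_ext d mu m) x) (beta_ext e (iter_ext e nu m) y)"
    using compare_step[OF ud ue cd ce _ _ _ _ _ _ km rho cl Suc] g1 g2 by blast
  then show ?case by simp
qed

theorem theorem9p2:
  fixes d :: "'a \<Rightarrow> 'a \<Rightarrow> real" and k :: nat and \<rho> :: real
    and mu :: "'a list \<Rightarrow> 'a" and le :: "'a \<Rightarrow> 'a \<Rightarrow> bool"
  assumes "Metric_space UNIV d" and "Metric_space.mcomplete UNIV d"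
    and "k \<ge> 2" and "0 < \<rho>" and "\<rho> < 1"
    and "is_mean k mu" and "nonexpansive_mean d k mu" and "coord_contractive d \<rho> k mu"
    and "closed_partial_order (Metric_space.mtopology UNIV d) (Metric_space.mtopology UNIV d) le"
  shows "(monotone_mean le k mu \<longrightarrow>
            (\<forall>n\<ge>k. monotone_mean le n (iter_ext d mu (n - k))))
       \<and> (\<forall>(\<delta> :: 'a \<Rightarrow> 'a \<Rightarrow> real) (nu :: 'a list \<Rightarrow> 'a).
            Metric_space UNIV \<delta> \<and> Metric_space.mcomplete UNIV \<delta> \<and>
            is_mean k nu \<and> nonexpansive_mean \<delta> k nu \<and> coord_contractive \<delta> \<rho> k nu \<and>
            closedin (prod_topology (Metric_space.mtopology UNIV d) (Metric_space.mtopology UNIV \<delta>))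
              {(x, y). le x y} \<and>
            (monotone_mean le k mu \<or> monotone_mean le k nu) \<and>
            (\<forall>x. length x = k \<longrightarrow> le (mu x) (nu x))
            \<longrightarrow> (\<forall>n\<ge>k. \<forall>x. length x = n \<longrightarrow>
                   le (iter_ext d mu (n - k) x) (iter_ext \<delta> nu (n - k) x)))"
proof -
  have ud: "umet d" using assms(1) by (simp add: umet_def)
  have k1: "k \<ge> 1" using assms(3) by simp
  have rho: "0 \<le> \<rho>" "\<rho> < 1" using assms(4,5) by auto
  have refl: "\<forall>x. le x x" and trans: "\<forall>x y z. le x y \<longrightarrow> le y z \<longrightarrow> le x z"
    and cl: "closedin (prod_topology (Metric_space.mtopology UNIV d) (Metric_space.mtopology UNIV d)) {(x, y). le x y}"
    using assms(9) unfolding closed_partial_order_def by auto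
  have part1: "monotone_mean le n (iter_ext d mu (n - k))" if mono: "monotone_mean le k mu" and n: "n \<ge> k" for n
  proof -
    have P: "\<forall>x y. length x = k \<longrightarrow> length y = k \<longrightarrow> list_all2 le x y \<longrightarrow> le (mu x) (mu y)"
      using mono unfolding monotone_mean_def by blast
    have "\<forall>x y. length x = k + (n-k) \<longrightarrow> length y = k + (n-k) \<longrightarrow> list_all2 le x y \<longrightarrow>
      le (iter_ext d mu (n-k) x) (iter_ext d mu (n-k) y)"
      by (rule main_compare[OF ud ud assms(2) assms(2) assms(7,8,6) assms(7,8,6) k1 rho cl P])
    then show ?thesis using n unfolding monotone_mean_def by simp
  qed
  have part2: "\<forall>n\<ge>k. \<forall>x. length x = n \<longrightarrow> le (iter_ext d mu (n - k) x) (iter_ext \<delta> nu (n - k) x)"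
    if h: "Metric_space UNIV \<delta> \<and> Metric_space.mcomplete UNIV \<delta> \<and>
            is_mean k nu \<and> nonexpansive_mean \<delta> k nu \<and> coord_contractive \<delta> \<rho> k nu \<and>
            closedin (prod_topology (Metric_space.mtopology UNIV d) (Metric_space.mtopology UNIV \<delta>))
              {(x, y). le x y} \<and>
            (monotone_mean le k mu \<or> monotone_mean le k nu) \<and>
            (\<forall>x. length x = k \<longrightarrow> le (mu x) (nu x))" for \<delta> nu
  proof (intro allI impI)
    fix n and x :: "'a list" assume n: "n \<ge> k" and lx: "length x = n"
    have ue: "umet \<delta>" using h by (simp add: umet_def)
    have P: "\<forall>x y. length x = k \<longrightarrow> length y = k \<longrightarrow> list_all2 le x y \<longrightarrow> le (mu x) (nu y)"
    proof (intro allI impI)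
      fix x y :: "'a list" assume "length x = k" "length y = k" "list_all2 le x y"
      then show "le (mu x) (nu y)"
        using h trans unfolding monotone_mean_def by metis
    qed
    have "\<forall>x y. length x = k + (n-k) \<longrightarrow> length y = k + (n-k) \<longrightarrow> list_all2 le x y \<longrightarrow>
      le (iter_ext d mu (n-k) x) (iter_ext \<delta> nu (n-k) y)"
      by (rule main_compare[OF ud ue assms(2) _ assms(7,8,6) _ _ _ k1 rho _ P]) (use h in auto)
    moreover have "list_all2 le x x" using refl by (simp add: list_all2_conv_all_nth)
    ultimately show "le (iter_ext d mu (n - k) x) (iter_ext \<delta> nu (n - k) x)" using n lx by simp
  qed
  show ?thesis using part1 part2 by blast
qed

end
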